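(* Let $n\geq 2$ be an integer. The ring $\mathrm{Mat}_n(\mathbb{Z})$ of $n\times n$ integer matrices has the presentation (as a unital associative ring) with two generators $x,y$ and three relations $$\mathrm{Mat}_n(\mathbb{Z}) \cong \langle x,y \mid x^n = 0,\ y^n=0,\ xy + y^{n-1}x^{n-1} = 1 \rangle.$$ That is, the quotient of the free unital associative ring $\mathbb{Z}\langle x,y\rangle$ by the two-sided ideal generated by $x^n$, $y^n$ and $xy + y^{n-1}x^{n-1} - 1$ is isomorphic to $\mathrm{Mat}_n(\mathbb{Z})$.
   Context: All rings are associative with unit, and presentations are taken in the category of unital associative rings. *)

theory Defs
  imports "HOL-Algebra.QuotRing" "Jordan_Normal_Form.Matrix"
begin

text \<open>The free unital associative ring Z<x,y> on two noncommuting generators,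
  realised as finitely supported integer-valued functions on words over the
  alphabet {True, False} (True stands for x, False for y); multiplication is
  the concatenation (Cauchy) product.\<close>

definition free_ring2 :: "(bool list \<Rightarrow> int) ring" where
  "free_ring2 = \<lparr>
     carrier = {f. finite {w. f w \<noteq> 0}},
     monoid.mult = (\<lambda>f g w. \<Sum>i\<le>length w. f (take i w) * g (drop i w)),
     one = (\<lambda>w. if w = [] then 1 else 0),
     zero = (\<lambda>w. 0),
     add = (\<lambda>f g w. f w + g w)\<rparr>"

definition gen_x :: "bool list \<Rightarrow> int" where
  "gen_x = (\<lambda>w. if w = [True] then 1 else 0)"

definition gen_y :: "bool list \<Rightarrow> int" where
  "gen_y = (\<lambda>w. if w = [False] then 1 else 0)"

definition relators :: "nat \<Rightarrow> (bool list \<Rightarrow> int) set" where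
  "relators n = {gen_x [^]\<^bsub>free_ring2\<^esub> n,
                 gen_y [^]\<^bsub>free_ring2\<^esub> n,
                 ((gen_x \<otimes>\<^bsub>free_ring2\<^esub> gen_y)
                   \<oplus>\<^bsub>free_ring2\<^esub> ((gen_y [^]\<^bsub>free_ring2\<^esub> (n - 1))
                        \<otimes>\<^bsub>free_ring2\<^esub> (gen_x [^]\<^bsub>free_ring2\<^esub> (n - 1))))
                   \<ominus>\<^bsub>free_ring2\<^esub> \<one>\<^bsub>free_ring2\<^esub>}"

end

theory Submission
  imports Defs
begin


definition cm :: "(bool list \<Rightarrow> int) \<Rightarrow> (bool list \<Rightarrow> int) \<Rightarrow> bool list \<Rightarrow> int" where
  "cm f g = (\<lambda>w. \<Sum>i\<le>length w. f (take i w) * g (drop i w))"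

definition dl :: "bool list \<Rightarrow> bool list \<Rightarrow> int" where
  "dl u = (\<lambda>w. if w = u then 1 else 0)"

definition supp :: "(bool list \<Rightarrow> int) \<Rightarrow> bool list set" where
  "supp f = {w. f w \<noteq> 0}"

lemma fr_simps:
  "carrier free_ring2 = {f. finite (supp f)}"
  "monoid.mult free_ring2 = cm"
  "one free_ring2 = dl []"
  "zero free_ring2 = (\<lambda>w. 0)"
  "add free_ring2 = (\<lambda>f g w. f w + g w)"
  by (auto simp: free_ring2_def cm_def dl_def supp_def fun_eq_iff)

lemma cm_lin_left:
  "cm (\<lambda>w. \<Sum>a\<in>S. c a * F a w) g = (\<lambda>w. \<Sum>a\<in>S. c a * cm (F a) g w)"
  by (simp add: cm_def fun_eq_iff sum_distrib_right sum_distrib_left mult.assoc sum.swap[of _ S])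

lemma cm_lin_right:
  "cm g (\<lambda>w. \<Sum>a\<in>S. c a * F a w) = (\<lambda>w. \<Sum>a\<in>S. c a * cm g (F a) w)"
  by (simp add: cm_def fun_eq_iff sum_distrib_right sum_distrib_left mult.assoc mult.left_commute sum.swap[of _ S])

lemma take_drop_iff:
  assumes "i \<le> length w"
  shows "(take i w = u \<and> drop i w = v) \<longleftrightarrow> (i = length u \<and> w = u @ v)"
  using assms by auto

lemma cm_dl_dl: "cm (dl u) (dl v) = dl (u @ v)"
proof (rule ext)
  fix w
  have "cm (dl u) (dl v) w = (\<Sum>i\<le>length w. if i = length u \<and> w = u @ v then 1 else 0)"
    unfolding cm_def dl_def
    by (rule sum.cong) (auto simp: take_drop_iff[symmetric])
  also have "\<dots> = dl (u @ v) w"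
    by (auto simp: dl_def sum.delta)
  finally show "cm (dl u) (dl v) w = dl (u @ v) w" .
qed

lemma decomp:
  assumes "finite S" "supp f \<subseteq> S"
  shows "f = (\<lambda>w. \<Sum>u\<in>S. f u * dl u w)"
proof (rule ext)
  fix w
  have "(\<Sum>u\<in>S. f u * dl u w) = (\<Sum>u\<in>S. if w = u then f u else 0)"
    by (rule sum.cong) (auto simp: dl_def)
  also have "\<dots> = f w" using assms by (auto simp: sum.delta supp_def)
  finally show "f w = (\<Sum>u\<in>S. f u * dl u w)" by simp
qed

lemma cm_expand:
  assumes "finite A" "supp f \<subseteq> A" "finite B" "supp g \<subseteq> B"
  shows "cm f g = (\<lambda>w. \<Sum>u\<in>A. \<Sum>v\<in>B. f u * g v * dl (u @ v) w)"
proof -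
  have "cm f g = cm (\<lambda>w. \<Sum>u\<in>A. f u * dl u w) (\<lambda>w. \<Sum>v\<in>B. g v * dl v w)"
    using decomp[OF assms(1,2)] decomp[OF assms(3,4)] by simp
  also have "\<dots> = (\<lambda>w. \<Sum>u\<in>A. \<Sum>v\<in>B. f u * g v * dl (u @ v) w)"
    unfolding cm_lin_left cm_lin_right cm_dl_dl
    by (simp add: sum_distrib_left mult.assoc)
  finally show ?thesis .
qed

lemma supp_cm:
  "supp (cm f g) \<subseteq> (\<lambda>(u,v). u @ v) ` (supp f \<times> supp g)"
proof
  fix w assume "w \<in> supp (cm f g)"
  then have "(\<Sum>i\<le>length w. f (take i w) * g (drop i w)) \<noteq> 0" by (simp add: supp_def cm_def)
  then obtain i where "f (take i w) * g (drop i w) \<noteq> 0" by (meson sum.neutral)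
  then show "w \<in> (\<lambda>(u,v). u @ v) ` (supp f \<times> supp g)"
    by (auto simp: supp_def intro!: image_eqI[of _ _ "(take i w, drop i w)"])
qed

lemma finite_supp_cm: "finite (supp f) \<Longrightarrow> finite (supp g) \<Longrightarrow> finite (supp (cm f g))"
  by (rule finite_subset[OF supp_cm]) auto

lemma cm_dl_left:
  assumes "finite C" "supp h \<subseteq> C"
  shows "cm (dl p) h = (\<lambda>w. \<Sum>z\<in>C. h z * dl (p @ z) w)"
  by (subst decomp[OF assms]) (simp add: cm_lin_right cm_dl_dl)

lemma cm_dl_right:
  assumes "finite C" "supp h \<subseteq> C"
  shows "cm h (dl p) = (\<lambda>w. \<Sum>z\<in>C. h z * dl (z @ p) w)"
  by (subst decomp[OF assms]) (simp add: cm_lin_left cm_dl_dl)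

lemma cm_assoc:
  assumes "finite (supp f)" "finite (supp g)" "finite (supp h)"
  shows "cm (cm f g) h = cm f (cm g h)"
proof -
  let ?A = "supp f" and ?B = "supp g" and ?C = "supp h"
  have E1: "cm f g = (\<lambda>w. \<Sum>u\<in>?A. f u * (\<Sum>v\<in>?B. g v * dl (u @ v) w))"
    by (subst cm_expand[OF assms(1) order_refl assms(2) order_refl]) (simp add: sum_distrib_left mult.assoc)
  have E2: "cm g h = (\<lambda>w. \<Sum>v\<in>?B. g v * (\<Sum>z\<in>?C. h z * dl (v @ z) w))"
    by (subst cm_expand[OF assms(2) order_refl assms(3) order_refl]) (simp add: sum_distrib_left mult.assoc)
  have L: "cm (cm f g) h = (\<lambda>w. \<Sum>u\<in>?A. \<Sum>v\<in>?B. \<Sum>z\<in>?C. f u * (g v * (h z * dl (u @ v @ z) w)))"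
    unfolding E1 cm_lin_left cm_dl_left[OF assms(3) order_refl]
    by (simp add: sum_distrib_left)
  have R: "cm f (cm g h) = (\<lambda>w. \<Sum>v\<in>?B. \<Sum>z\<in>?C. \<Sum>u\<in>?A. g v * (h z * (f u * dl (u @ v @ z) w)))"
    unfolding E2 cm_lin_right cm_dl_right[OF assms(1) order_refl]
    by (simp add: sum_distrib_left)
  show ?thesis unfolding L R
  proof (rule ext)
    fix w
    have "(\<Sum>u\<in>?A. \<Sum>v\<in>?B. \<Sum>z\<in>?C. f u * (g v * (h z * dl (u @ v @ z) w)))
       = (\<Sum>v\<in>?B. \<Sum>u\<in>?A. \<Sum>z\<in>?C. f u * (g v * (h z * dl (u @ v @ z) w)))" by (rule sum.swap)
    also have "\<dots> = (\<Sum>v\<in>?B. \<Sum>z\<in>?C. \<Sum>u\<in>?A. f u * (g v * (h z * dl (u @ v @ z) w)))"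
      by (rule sum.cong[OF refl], rule sum.swap)
    finally show "(\<Sum>u\<in>?A. \<Sum>v\<in>?B. \<Sum>z\<in>?C. f u * (g v * (h z * dl (u @ v @ z) w)))
      = (\<Sum>v\<in>?B. \<Sum>z\<in>?C. \<Sum>u\<in>?A. g v * (h z * (f u * dl (u @ v @ z) w)))"
      by (simp add: ac_simps)
  qed
qed


lemma supp_add: "supp (\<lambda>w. f w + g w) \<subseteq> supp f \<union> supp g"
  by (auto simp: supp_def)

lemma supp_dl: "supp (dl u) = {u}"
  by (auto simp: supp_def dl_def)

lemma cm_one_left: "finite (supp f) \<Longrightarrow> cm (dl []) f = f"
  by (subst cm_dl_left[OF _ order_refl], assumption) (simp add: decomp[symmetric, OF _ order_refl])

lemma cm_one_right: "finite (supp f) \<Longrightarrow> cm f (dl []) = f"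
  by (subst cm_dl_right[OF _ order_refl], assumption) (simp add: decomp[symmetric, OF _ order_refl])

lemma cm_add_left: "cm (\<lambda>w. f w + g w) h = (\<lambda>w. cm f h w + cm g h w)"
  by (simp add: cm_def fun_eq_iff distrib_right sum.distrib)

lemma cm_add_right: "cm h (\<lambda>w. f w + g w) = (\<lambda>w. cm h f w + cm h g w)"
  by (simp add: cm_def fun_eq_iff distrib_left sum.distrib)

lemma ring_fr: "ring free_ring2"
proof (rule ringI)
  show "abelian_group free_ring2"
  proof (rule abelian_groupI, simp_all add: fr_simps)
    fix x y assume "finite (supp x)" "finite (supp y)"
    then show "finite (supp (\<lambda>w. x w + y w))" by (rule finite_subset[OF supp_add, OF finite_UnI])
  next
    show "finite (supp (\<lambda>w. 0))" by (simp add: supp_def)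
  next
    fix x assume "finite (supp x)"
    then show "\<exists>y. finite (supp y) \<and> (\<lambda>w. y w + x w) = (\<lambda>w. 0)"
      by (intro exI[of _ "\<lambda>w. - x w"]) (simp add: supp_def)
  qed (auto simp: fun_eq_iff)
next
  show "monoid free_ring2"
    by (rule monoidI) (auto simp: fr_simps finite_supp_cm supp_dl cm_assoc cm_one_left cm_one_right)
qed (auto simp: fr_simps cm_add_left cm_add_right)



fun Mb :: "nat \<Rightarrow> bool list \<Rightarrow> nat \<Rightarrow> nat \<Rightarrow> bool" where
  "Mb n [] i j = (i = j)"
| "Mb n (True # w) i j = (0 < i \<and> Mb n w (i - 1) j)"
| "Mb n (False # w) i j = (i + 1 < n \<and> Mb n w (i + 1) j)"

definition Mi :: "nat \<Rightarrow> bool list \<Rightarrow> nat \<Rightarrow> nat \<Rightarrow> int" where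
  "Mi n w i j = of_bool (Mb n w i j)"

lemma Mi_append:
  assumes "i < n"
  shows "Mi n (u @ v) i j = (\<Sum>k<n. Mi n u i k * Mi n v k j)"
  using assms
proof (induction u arbitrary: i)
  case Nil
  have "(\<Sum>k<n. Mi n [] i k * Mi n v k j) = (\<Sum>k<n. if i = k then Mi n v k j else 0)"
    by (rule sum.cong) (auto simp: Mi_def)
  then show ?case using Nil by (simp add: sum.delta)
next
  case (Cons b u)
  show ?case
  proof (cases b)
    case True
    then show ?thesis using Cons by (cases "0 < i") (auto simp: Mi_def)
  next
    case False
    then show ?thesis using Cons by (cases "i + 1 < n") (auto simp: Mi_def)
  qed
qed

definition phi :: "nat \<Rightarrow> (bool list \<Rightarrow> int) \<Rightarrow> int mat" where
  "phi n f = mat n n (\<lambda>(i,j). \<Sum>w\<in>supp f. f w * Mi n w i j)"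

lemma phi_sup:
  assumes "finite S" "supp f \<subseteq> S"
  shows "phi n f = mat n n (\<lambda>(i,j). \<Sum>w\<in>S. f w * Mi n w i j)"
  unfolding phi_def
  by (rule cong[OF refl, of _ _ "mat n n"], rule ext, clarify, rule sum.mono_neutral_left)
     (use assms in \<open>auto simp: supp_def\<close>)

lemma phi_add:
  assumes "finite (supp f)" "finite (supp g)"
  shows "phi n (\<lambda>w. f w + g w) = phi n f + phi n g"
proof -
  let ?S = "supp f \<union> supp g"
  have "finite ?S" using assms by auto
  show ?thesis
    unfolding phi_sup[OF \<open>finite ?S\<close> supp_add] phi_sup[OF \<open>finite ?S\<close> Un_upper1]
      phi_sup[OF \<open>finite ?S\<close> Un_upper2]
    by (rule eq_matI) (auto simp: distrib_right sum.distrib)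
qed

lemma phi_one: "phi n (dl []) = 1\<^sub>m n"
  unfolding phi_def supp_dl
  by (rule eq_matI) (auto simp: dl_def Mi_def)

lemma phi_mult:
  assumes f: "finite (supp f)" and g: "finite (supp g)"
  shows "phi n (cm f g) = phi n f * phi n g"
proof -
  let ?A = "supp f" and ?B = "supp g"
  let ?S = "(\<lambda>(u,v). u @ v) ` (?A \<times> ?B)"
  have fS: "finite ?S" using assms by auto
  have E: "cm f g = (\<lambda>w. \<Sum>u\<in>?A. \<Sum>v\<in>?B. f u * g v * dl (u @ v) w)"
    by (rule cm_expand[OF f order_refl g order_refl])
  show ?thesis
  proof (rule eq_matI)
    fix i j assume ij: "i < dim_row (phi n f * phi n g)" "j < dim_col (phi n f * phi n g)"
    then have i: "i < n" and j: "j < n" by (auto simp: phi_def)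
    have "phi n (cm f g) $$ (i,j) = (\<Sum>w\<in>?S. cm f g w * Mi n w i j)"
      unfolding phi_sup[OF fS supp_cm] using i j by simp
    also have "\<dots> = (\<Sum>u\<in>?A. \<Sum>v\<in>?B. f u * g v * (\<Sum>w\<in>?S. dl (u @ v) w * Mi n w i j))"
      unfolding E by (simp add: sum_distrib_right sum_distrib_left sum.swap[of _ ?S] mult.assoc)
    also have "\<dots> = (\<Sum>u\<in>?A. \<Sum>v\<in>?B. f u * g v * Mi n (u @ v) i j)"
    proof (intro sum.cong refl)
      fix u v assume "u \<in> ?A" "v \<in> ?B"
      then have "u @ v \<in> ?S" by auto
      then show "f u * g v * (\<Sum>w\<in>?S. dl (u @ v) w * Mi n w i j) = f u * g v * Mi n (u @ v) i j"
      proof -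
        have "(\<Sum>w\<in>?S. dl (u @ v) w * Mi n w i j) = (\<Sum>w\<in>?S. if u @ v = w then Mi n w i j else 0)"
          by (rule sum.cong) (auto simp: dl_def)
        then show ?thesis using fS \<open>u @ v \<in> ?S\<close> by (simp only: sum.delta) simp
      qed
    qed
    also have "\<dots> = (\<Sum>k<n. (\<Sum>u\<in>?A. f u * Mi n u i k) * (\<Sum>v\<in>?B. g v * Mi n v k j))"
      unfolding Mi_append[OF i]
      apply (simp add: sum_distrib_right sum_distrib_left sum.swap[of _ "{..<n}"] ac_simps)
      apply (rule sum.cong[OF refl])
      apply (subst sum.swap)
      apply (simp add: ac_simps)
      done
    also have "\<dots> = (phi n f * phi n g) $$ (i,j)"
      using i j by (simp add: phi_def scalar_prod_def lessThan_atLeast0)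
    finally show "phi n (cm f g) $$ (i,j) = (phi n f * phi n g) $$ (i,j)" .
  qed (auto simp: phi_def)
qed


lemma supp_lincomb: "supp (\<lambda>w. \<Sum>a\<in>P. c a * dl (u a) w) \<subseteq> u ` P"
proof
  fix w assume "w \<in> supp (\<lambda>w. \<Sum>a\<in>P. c a * dl (u a) w)"
  then have "(\<Sum>a\<in>P. c a * dl (u a) w) \<noteq> 0" by (simp add: supp_def)
  then obtain a where "a \<in> P" "c a * dl (u a) w \<noteq> 0" by (meson sum.neutral)
  then show "w \<in> u ` P" by (auto simp: dl_def split: if_splits)
qed

lemma phi_lincomb:
  assumes "finite P"
  shows "phi n (\<lambda>w. \<Sum>a\<in>P. c a * dl (u a) w) = mat n n (\<lambda>(i,j). \<Sum>a\<in>P. c a * Mi n (u a) i j)"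
proof -
  have fS: "finite (u ` P)" using assms by auto
  show ?thesis
    unfolding phi_sup[OF fS supp_lincomb]
  proof (rule eq_matI, simp_all)
    fix i j assume "i < n" "j < n"
    have "(\<Sum>w\<in>u ` P. (\<Sum>a\<in>P. c a * dl (u a) w) * Mi n w i j)
        = (\<Sum>a\<in>P. c a * (\<Sum>w\<in>u ` P. dl (u a) w * Mi n w i j))"
      by (simp add: sum_distrib_right sum_distrib_left sum.swap[of _ "u ` P"] mult.assoc)
    also have "\<dots> = (\<Sum>a\<in>P. c a * Mi n (u a) i j)"
    proof (intro sum.cong refl)
      fix a assume a: "a \<in> P"
      have "(\<Sum>w\<in>u ` P. dl (u a) w * Mi n w i j) = (\<Sum>w\<in>u ` P. if u a = w then Mi n w i j else 0)"
        by (rule sum.cong) (auto simp: dl_def)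
      then show "c a * (\<Sum>w\<in>u ` P. dl (u a) w * Mi n w i j) = c a * Mi n (u a) i j"
        using fS a by (simp only: sum.delta) simp
    qed
    finally show "(\<Sum>w\<in>u ` P. (\<Sum>a\<in>P. c a * dl (u a) w) * Mi n w i j) = (\<Sum>a\<in>P. c a * Mi n (u a) i j)" .
  qed
qed

lemma Mb_repT: "Mb n (replicate k True @ w) i j = (k \<le> i \<and> Mb n w (i - k) j)"
proof (induction k arbitrary: i)
  case (Suc k)
  have "Mb n (replicate (Suc k) True @ w) i j = (0 < i \<and> Mb n (replicate k True @ w) (i - 1) j)"
    by (simp only: replicate_Suc append_Cons Mb.simps)
  also have "\<dots> = (0 < i \<and> k \<le> i - 1 \<and> Mb n w (i - 1 - k) j)" by (simp only: Suc.IH)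
  also have "\<dots> = (Suc k \<le> i \<and> Mb n w (i - Suc k) j)"
    by (cases i) auto
  finally show ?case .
qed (simp only: replicate_0 append_Nil, simp)

lemma Mb_repF: "i < n \<Longrightarrow> Mb n (replicate k False @ w) i j = (i + k < n \<and> Mb n w (i + k) j)"
proof (induction k arbitrary: i)
  case (Suc k)
  have "Mb n (replicate (Suc k) False @ w) i j = (i + 1 < n \<and> Mb n (replicate k False @ w) (i + 1) j)"
    by (simp only: replicate_Suc append_Cons Mb.simps)
  also have "\<dots> = (i + 1 < n \<and> i + 1 + k < n \<and> Mb n w (i + 1 + k) j)" using Suc.IH[of "i+1"] by blast
  also have "\<dots> = (i + Suc k < n \<and> Mb n w (i + Suc k) j)" by auto
  finally show ?case .
qed (simp only: replicate_0 append_Nil, simp)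

definition wd :: "nat \<Rightarrow> nat \<Rightarrow> nat \<Rightarrow> bool list" where
  "wd n p q = replicate p True @ replicate (n - 1) False @ replicate (n - 1) True @ replicate q False"

lemma Mb_wd:
  assumes "p < n" "q < n" "i < n"
  shows "Mb n (wd n p q) i j = (i = p \<and> j = q)"
proof -
  obtain m where n: "n = Suc m" using assms by (cases n) auto
  have A: "Mb n (wd n p q) i j = (p \<le> i \<and> Mb n (replicate m False @ replicate m True @ replicate q False) (i - p) j)"
    unfolding wd_def n by (simp only: diff_Suc_1 append_assoc Mb_repT)
  show ?thesis
  proof (cases "i = p")
    case False
    have "\<not> Mb n (replicate m False @ replicate m True @ replicate q False) (i - p) j" if "p \<le> i"
    proof -
      have "i - p < n" using assms by auto
      then show ?thesis using Mb_repF[of "i - p" n m] that False n by auto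
    qed
    then show ?thesis using A False by auto
  next
    case True
    have "Mb n (replicate m False @ replicate m True @ replicate q False) 0 j = Mb n (replicate m True @ replicate q False) m j"
      using Mb_repF[of 0 n m] n by simp
    also have "\<dots> = Mb n (replicate q False @ []) 0 j" by (simp only: Mb_repT append_Nil2) simp
    also have "\<dots> = (q = j)" using Mb_repF[of 0 n q "[]"] assms n by (simp only: Mb.simps) simp
    finally show ?thesis using A True by auto
  qed
qed

lemma phi_carrier: "phi n f \<in> carrier_mat n n"
  by (simp add: phi_def)

lemma ring_hom_phi: "ring_hom_ring free_ring2 (ring_mat TYPE(int) n ()) (phi n)"
proof (rule ring_hom_ringI[OF ring_fr ring_mat])
  fix x assume "x \<in> carrier free_ring2"
  show "phi n x \<in> carrier (ring_mat TYPE(int) n ())" by (simp add: ring_mat_simps phi_carrier)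
next
  fix x y assume "x \<in> carrier free_ring2" "y \<in> carrier free_ring2"
  then have "finite (supp x)" "finite (supp y)" by (simp_all add: fr_simps)
  then show "phi n (x \<otimes>\<^bsub>free_ring2\<^esub> y) = phi n x \<otimes>\<^bsub>ring_mat TYPE(int) n ()\<^esub> phi n y"
    and "phi n (x \<oplus>\<^bsub>free_ring2\<^esub> y) = phi n x \<oplus>\<^bsub>ring_mat TYPE(int) n ()\<^esub> phi n y"
    by (simp_all only: fr_simps ring_mat_simps phi_mult phi_add)
next
  show "phi n \<one>\<^bsub>free_ring2\<^esub> = \<one>\<^bsub>ring_mat TYPE(int) n ()\<^esub>"
    by (simp only: fr_simps ring_mat_simps phi_one)
qed

lemma phi_surj: "phi n ` carrier free_ring2 = carrier (ring_mat TYPE(int) n ())"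
proof (rule equalityI)
  show "phi n ` carrier free_ring2 \<subseteq> carrier (ring_mat TYPE(int) n ())"
    by (auto simp: ring_mat_simps phi_def)
next
  show "carrier (ring_mat TYPE(int) n ()) \<subseteq> phi n ` carrier free_ring2"
  proof
    fix A :: "int mat" assume "A \<in> carrier (ring_mat TYPE(int) n ())"
    then have A: "A \<in> carrier_mat n n" by (simp add: ring_mat_simps)
    let ?P = "{..<n} \<times> {..<n}"
    let ?f = "\<lambda>w. \<Sum>a\<in>?P. A $$ a * dl (case_prod (wd n) a) w"
    have "finite (supp ?f)" by (rule finite_subset[OF supp_lincomb]) auto
    then have fc: "?f \<in> carrier free_ring2" by (simp add: fr_simps)
    have "phi n ?f = A"
      unfolding phi_lincomb[of ?P, OF finite_SigmaI[OF finite_lessThan finite_lessThan]]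
    proof (rule eq_matI)
      fix i j assume "i < dim_row A" "j < dim_col A"
      then have ij: "i < n" "j < n" using A by auto
      have "(\<Sum>a\<in>?P. A $$ a * Mi n (case_prod (wd n) a) i j) = (\<Sum>a\<in>?P. if a = (i,j) then A $$ a else 0)"
      proof (rule sum.cong[OF refl])
        fix a assume "a \<in> ?P"
        then obtain p q where a: "a = (p,q)" "p < n" "q < n" by auto
        then have "Mb n (wd n p q) i j = (i = p \<and> j = q)" using ij by (simp add: Mb_wd)
        then show "A $$ a * Mi n (case_prod (wd n) a) i j = (if a = (i, j) then A $$ a else 0)"
          using a by (auto simp: Mi_def)
      qed
      also have "\<dots> = A $$ (i,j)" using ij by (simp add: sum.delta')
      finally show "mat n n (\<lambda>(i, j). \<Sum>a\<in>?P. A $$ a * Mi n (case a of (x, xa) \<Rightarrow> wd n x xa) i j) $$ (i, j) = A $$ (i, j)"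
        using ij by simp
    qed (use A in auto)
    then show "A \<in> phi n ` carrier free_ring2" using fc by force
  qed
qed



locale mrel = ring Q for Q (structure) +
  fixes n :: nat and X Y
  assumes n2: "2 \<le> n" and XC [simp]: "X \<in> carrier Q" and YC [simp]: "Y \<in> carrier Q"
    and Xn: "X [^] n = \<zero>" and Yn: "Y [^] n = \<zero>"
    and rel: "X \<otimes> Y \<oplus> Y [^] (n - 1) \<otimes> X [^] (n - 1) = \<one>"
begin

definition "m = n - 1"
definition "A = Y [^] m \<otimes> X [^] m"
definition "C = \<one> \<ominus> Y \<otimes> X"
definition "E (p::nat) (q::nat) = X [^] p \<otimes> A \<otimes> Y [^] q"

lemma n_m: "n = Suc m" and m1: "1 \<le> m" using n2 by (auto simp: m_def)

lemma AC [simp]: "A \<in> carrier Q" and CC [simp]: "C \<in> carrier Q" and EC [simp]: "E p q \<in> carrier Q"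
  by (auto simp: A_def C_def E_def)

lemma Xn': "X [^] m \<otimes> X = \<zero>"
proof -
  have "Suc m = n" by (rule n_m[symmetric])
  have "X [^] m \<otimes> X = X [^] Suc m" by simp
  also have "\<dots> = X [^] n" by (simp only: \<open>Suc m = n\<close>)
  finally show ?thesis using Xn by simp
qed
lemma Yn': "Y [^] m \<otimes> Y = \<zero>"
proof -
  have "Suc m = n" by (rule n_m[symmetric])
  have "Y [^] m \<otimes> Y = Y [^] Suc m" by simp
  also have "\<dots> = Y [^] n" by (simp only: \<open>Suc m = n\<close>)
  finally show ?thesis using Yn by simp
qed
lemma Ypc: "Y \<otimes> Y [^] (k::nat) = Y [^] k \<otimes> Y" using nat_pow_Suc2[of Y k] by simp

lemma Ycomm: "Y [^] s \<otimes> (Y \<otimes> z) = Y \<otimes> (Y [^] s \<otimes> z)" if "z \<in> carrier Q" for s :: nat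
proof -
  have "Y [^] s \<otimes> Y = Y \<otimes> Y [^] s" using nat_pow_Suc2[of Y s] by simp
  then show ?thesis using that by (simp add: m_assoc[symmetric])
qed

lemma Xcomm: "X [^] s \<otimes> (X \<otimes> z) = X \<otimes> (X [^] s \<otimes> z)" if "z \<in> carrier Q" for s :: nat
proof -
  have "X [^] s \<otimes> X = X \<otimes> X [^] s" using nat_pow_Suc2[of X s] by simp
  then show ?thesis using that by (simp add: m_assoc[symmetric])
qed

lemma relA: "X \<otimes> Y \<oplus> A = \<one>"
  using rel by (simp add: A_def m_def)

lemma Xpow_Suc2: "X [^] Suc k = X \<otimes> X [^] k" by (rule nat_pow_Suc2) simp
lemma Ypow_Suc2: "Y [^] Suc k = Y \<otimes> Y [^] k" by (rule nat_pow_Suc2) simp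

lemma AX: "A \<otimes> X = \<zero>"
proof -
  have "A \<otimes> X = Y [^] m \<otimes> (X [^] m \<otimes> X)" by (simp add: A_def m_assoc)
  then show ?thesis by (simp add: Xn')
qed

lemma YA: "Y \<otimes> A = \<zero>"
proof -
  have "Y \<otimes> A = (Y \<otimes> Y [^] m) \<otimes> X [^] m" by (simp add: A_def m_assoc)
  then show ?thesis by (simp add: Yn' Ypc)
qed

lemma AA: "A \<otimes> A = A"
proof -
  have "A \<otimes> (X \<otimes> Y \<oplus> A) = A" by (simp add: relA)
  then have "(A \<otimes> X) \<otimes> Y \<oplus> A \<otimes> A = A" by (simp add: r_distr m_assoc)
  then show ?thesis by (simp add: AX)
qed

lemma XYX: "X \<otimes> (Y \<otimes> X) = X"
proof -
  have "(X \<otimes> Y \<oplus> A) \<otimes> X = X" by (simp add: relA)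
  then show ?thesis by (simp add: l_distr m_assoc AX)
qed

lemma relC: "Y \<otimes> X \<oplus> C = \<one>"
  by (simp add: C_def minus_eq add.m_lcomm r_neg)

lemma XC0: "X \<otimes> C = \<zero>"
proof -
  have "X \<otimes> (Y \<otimes> X \<oplus> C) = X" by (simp add: relC)
  then have "X \<oplus> X \<otimes> C = X" by (simp add: r_distr m_assoc XYX)
  then show ?thesis by simp
qed

lemma AYX: "A \<otimes> (Y \<otimes> X) = A"
proof -
  obtain k where k: "m = Suc k" using m1 by (cases m) auto
  have "A \<otimes> (Y \<otimes> X) = Y [^] m \<otimes> (X [^] k \<otimes> (X \<otimes> (Y \<otimes> X)))"
    by (simp add: A_def k m_assoc)
  also have "\<dots> = A" by (simp add: XYX A_def k m_assoc)
  finally show ?thesis .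
qed

lemma AC0: "A \<otimes> C = \<zero>"
proof -
  have "A \<otimes> (Y \<otimes> X \<oplus> C) = A" by (simp add: relC)
  then have "A \<oplus> A \<otimes> C = A" by (simp add: r_distr AYX)
  then show ?thesis by simp
qed

lemma XpowC: "0 < (k::nat) \<Longrightarrow> X [^] k \<otimes> C = \<zero>"
  by (cases k) (auto simp: m_assoc XC0)

lemma QP: "s \<le> m \<Longrightarrow> X [^] s \<otimes> (Y [^] s \<otimes> C) = C \<and> (s < m \<longrightarrow> A \<otimes> (Y [^] s \<otimes> C) = \<zero>)"
proof (induction s)
  case 0
  then show ?case using AC0 by simp
next
  case (Suc s)
  then have IH: "X [^] s \<otimes> (Y [^] s \<otimes> C) = C" and P: "A \<otimes> (Y [^] s \<otimes> C) = \<zero>" by auto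
  have Q1: "X [^] Suc s \<otimes> (Y [^] Suc s \<otimes> C) = C"
  proof -
    have e0: "X [^] s \<otimes> ((X \<otimes> Y \<oplus> A) \<otimes> (Y [^] s \<otimes> C)) = C" by (simp add: relA IH)
    have e1: "X [^] Suc s \<otimes> (Y [^] Suc s \<otimes> C) = X [^] s \<otimes> (X \<otimes> (Y \<otimes> (Y [^] s \<otimes> C)))"
      by (simp add: m_assoc Ycomm)
    have e2: "X [^] s \<otimes> ((X \<otimes> Y \<oplus> A) \<otimes> (Y [^] s \<otimes> C)) = X [^] s \<otimes> (X \<otimes> (Y \<otimes> (Y [^] s \<otimes> C))) \<oplus> X [^] s \<otimes> (A \<otimes> (Y [^] s \<otimes> C))"
      by (simp del: nat_pow_Suc add: l_distr r_distr m_assoc)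
    show ?thesis using e0 e1 e2 P by simp
  qed
  have Q1': "X [^] s \<otimes> (X \<otimes> (Y [^] s \<otimes> (Y \<otimes> C))) = C"
    using Q1 by (simp add: m_assoc)
  moreover have "A \<otimes> (Y [^] Suc s \<otimes> C) = \<zero>" if "Suc s < m"
  proof -
    have pm: "X [^] (m - Suc s) \<otimes> X [^] Suc s = X [^] m"
      using that by (simp only: nat_pow_mult[OF XC]) simp
    have "A \<otimes> (Y [^] Suc s \<otimes> C) = Y [^] m \<otimes> (X [^] m \<otimes> (Y [^] Suc s \<otimes> C))"
      by (simp only: A_def m_assoc nat_pow_closed XC YC CC m_closed)
    also have "\<dots> = Y [^] m \<otimes> ((X [^] (m - Suc s) \<otimes> X [^] Suc s) \<otimes> (Y [^] Suc s \<otimes> C))"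
      by (simp only: pm)
    also have "\<dots> = Y [^] m \<otimes> (X [^] (m - Suc s) \<otimes> (X [^] Suc s \<otimes> (Y [^] Suc s \<otimes> C)))"
      by (simp only: m_assoc nat_pow_closed XC YC CC m_closed)
    also have "\<dots> = Y [^] m \<otimes> (X [^] (m - Suc s) \<otimes> C)" by (simp only: Q1)
    also have "\<dots> = \<zero>" using that by (simp add: XpowC)
    finally show ?thesis .
  qed
  ultimately show ?case using Q1 by blast
qed


lemma AXpow: "0 < (k::nat) \<Longrightarrow> z \<in> carrier Q \<Longrightarrow> A \<otimes> (X [^] k \<otimes> z) = \<zero>"
proof -
  assume "0 < k" "z \<in> carrier Q"
  then obtain k' where k: "k = Suc k'" by (cases k) auto
  have "A \<otimes> (X [^] k \<otimes> z) = (A \<otimes> X) \<otimes> (X [^] k' \<otimes> z)"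
    unfolding k Xpow_Suc2 using \<open>z \<in> carrier Q\<close> by (simp del: nat_pow_Suc add: m_assoc)
  then show ?thesis using \<open>z \<in> carrier Q\<close> by (simp add: AX)
qed

lemma YpowA: "0 < (k::nat) \<Longrightarrow> z \<in> carrier Q \<Longrightarrow> Y [^] k \<otimes> (A \<otimes> z) = \<zero>"
proof -
  assume "0 < k" "z \<in> carrier Q"
  then obtain k' where k: "k = Suc k'" by (cases k) auto
  have "Y [^] k \<otimes> (A \<otimes> z) = Y [^] k' \<otimes> ((Y \<otimes> A) \<otimes> z)"
    unfolding k using \<open>z \<in> carrier Q\<close> by (simp add: m_assoc)
  then show ?thesis using \<open>z \<in> carrier Q\<close> by (simp add: YA)
qed

lemma G: "q \<le> m \<Longrightarrow> A \<otimes> (Y [^] q \<otimes> (X [^] (r::nat) \<otimes> A)) = (if q = r then A else \<zero>)"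
proof (induction q arbitrary: r)
  case 0
  show ?case
  proof (cases r)
    case 0 then show ?thesis by (simp add: AA)
  next
    case (Suc r') then show ?thesis using AXpow[of "Suc r'" A] by simp
  qed
next
  case (Suc q)
  then have qm: "q < m" by simp
  show ?case
  proof (cases r)
    case 0 then show ?thesis using YpowA[of "Suc q" "\<one>"] by (simp del: nat_pow_Suc add: m_assoc[symmetric] YpowA)
  next
    case (Suc r')
    have e: "A \<otimes> (Y [^] Suc q \<otimes> (X [^] Suc r' \<otimes> A)) = A \<otimes> (Y [^] q \<otimes> (Y \<otimes> (X \<otimes> (X [^] r' \<otimes> A))))"
      by (simp add: m_assoc Xcomm)
    have D: "A \<otimes> (Y [^] q \<otimes> ((Y \<otimes> X \<oplus> C) \<otimes> (X [^] r' \<otimes> A))) = A \<otimes> (Y [^] q \<otimes> (Y \<otimes> (X \<otimes> (X [^] r' \<otimes> A)))) \<oplus> (A \<otimes> (Y [^] q \<otimes> C)) \<otimes> (X [^] r' \<otimes> A)"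
      by (simp del: nat_pow_Suc add: l_distr r_distr m_assoc)
    have Z: "A \<otimes> (Y [^] q \<otimes> C) = \<zero>" using QP[of q] qm by simp
    have "A \<otimes> (Y [^] q \<otimes> ((Y \<otimes> X \<oplus> C) \<otimes> (X [^] r' \<otimes> A))) = A \<otimes> (Y [^] q \<otimes> (X [^] r' \<otimes> A))"
      by (simp del: nat_pow_Suc add: relC)
    then have "A \<otimes> (Y [^] Suc q \<otimes> (X [^] Suc r' \<otimes> A)) = A \<otimes> (Y [^] q \<otimes> (X [^] r' \<otimes> A))"
      using D Z e by (simp del: nat_pow_Suc)
    then show ?thesis using Suc.IH[of r'] qm Suc by simp
  qed
qed

lemma Tel: "(\<Oplus>p\<in>{..<k}. E p p) \<oplus> X [^] k \<otimes> Y [^] k = \<one>"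
proof (induction k)
  case 0 then show ?case by simp
next
  case (Suc k)
  have st: "E k k \<oplus> X [^] Suc k \<otimes> Y [^] Suc k = X [^] k \<otimes> Y [^] k"
  proof -
    have "X [^] k \<otimes> ((X \<otimes> Y \<oplus> A) \<otimes> Y [^] k) = X [^] k \<otimes> Y [^] k" by (simp add: relA)
    moreover have "X [^] k \<otimes> ((X \<otimes> Y \<oplus> A) \<otimes> Y [^] k) = X [^] Suc k \<otimes> Y [^] Suc k \<oplus> E k k"
      by (simp add: l_distr r_distr m_assoc E_def Ypc)
    ultimately show ?thesis by (simp add: a_comm Ypc)
  qed
  have "(\<Oplus>p\<in>{..<Suc k}. E p p) \<oplus> X [^] Suc k \<otimes> Y [^] Suc k
      = (\<Oplus>p\<in>{..<k}. E p p) \<oplus> (E k k \<oplus> X [^] Suc k \<otimes> Y [^] Suc k)"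
    by (simp del: nat_pow_Suc add: lessThan_Suc finsum_insert a_ac)
  also have "\<dots> = \<one>" using Suc st by simp
  finally show ?case .
qed

lemma sumE: "(\<Oplus>p\<in>{..<n}. E p p) = \<one>"
  using Tel[of n] by (simp add: Xn)

lemma EE: "q < n \<Longrightarrow> E p q \<otimes> E r s = (if q = r then E p s else \<zero>)"
proof -
  assume "q < n"
  then have "q \<le> m" using n_m by simp
  have "E p q \<otimes> E r s = X [^] p \<otimes> (A \<otimes> (Y [^] q \<otimes> (X [^] r \<otimes> A))) \<otimes> Y [^] s"
    by (simp del: nat_pow_Suc add: E_def m_assoc)
  then show ?thesis using G[OF \<open>q \<le> m\<close>, of r] by (simp add: E_def)
qed

lemma XE: "p < n \<Longrightarrow> X \<otimes> E p q = (if Suc p < n then E (Suc p) q else \<zero>)"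
proof -
  assume "p < n"
  have "X \<otimes> E p q = X [^] Suc p \<otimes> A \<otimes> Y [^] q"
    by (simp add: E_def m_assoc Xcomm)
  moreover have "X [^] Suc p = \<zero>" if "\<not> Suc p < n"
  proof -
    have "Suc p = n" using that \<open>p < n\<close> by simp
    then show ?thesis using Xn by simp
  qed
  ultimately show ?thesis by (simp del: nat_pow_Suc add: E_def)
qed


lemma YE: "p < n \<Longrightarrow> Y \<otimes> E p q = (if 0 < p then E (p - 1) q else \<zero>)"
proof -
  assume pn: "p < n"
  have fin: "finite {..<n}" by simp
  have "Y \<otimes> E p q = (\<Oplus>r\<in>{..<n}. E r r) \<otimes> (Y \<otimes> E p q)" using sumE by (simp add: m_assoc)
  also have "\<dots> = (\<Oplus>r\<in>{..<n}. E r r \<otimes> (Y \<otimes> E p q))"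
    by (rule finsum_ldistr) auto
  also have "\<dots> = (\<Oplus>r\<in>{..<n}. if Suc r = p then E r q else \<zero>)"
  proof (rule finsum_cong')
    fix r assume "r \<in> {..<n}"
    then have rn: "r < n" by simp
    have e: "E r r \<otimes> (Y \<otimes> E p q) = X [^] r \<otimes> (A \<otimes> (Y [^] Suc r \<otimes> (X [^] p \<otimes> A))) \<otimes> Y [^] q"
      by (simp add: E_def m_assoc Ycomm)
    show "E r r \<otimes> (Y \<otimes> E p q) = (if Suc r = p then E r q else \<zero>)"
    proof (cases "Suc r \<le> m")
      case True
      then show ?thesis unfolding e G[OF True] by (simp add: E_def)
    next
      case False
      then have "r = m" using rn n_m by simp
      then have "Y [^] Suc r = \<zero>" using Yn' by simp
      moreover have "Suc r \<noteq> p" using \<open>r = m\<close> pn n_m by simp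
      ultimately show ?thesis unfolding e by simp
    qed
  qed auto
  also have "\<dots> = (if 0 < p then E (p - 1) q else \<zero>)"
  proof (cases "0 < p")
    case True
    have "(\<Oplus>r\<in>{..<n}. if Suc r = p then E r q else \<zero>) = (\<Oplus>r\<in>{..<n}. if p - 1 = r then E r q else \<zero>)"
      by (rule finsum_cong') (use True in auto)
    also have "\<dots> = E (p - 1) q" by (rule finsum_singleton) (use pn in auto)
    finally show ?thesis using True by simp
  next
    case False
    have "(\<Oplus>r\<in>{..<n}. if Suc r = p then E r q else \<zero>) = (\<Oplus>r\<in>{..<n}. \<zero>)"
      by (rule finsum_cong') (use False in auto)
    then show ?thesis using False by simp
  qed
  finally show ?thesis .
qed

lemma shift:
  assumes F: "\<And>i. F i \<in> carrier Q"
  shows "(\<Oplus>i\<in>{..<n}. if Suc i < n then F (Suc i) else \<zero>) = (\<Oplus>i\<in>{..<n}. if 0 < i then F i else \<zero>)"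
proof -
  have nm: "Suc m = n" by (rule n_m[symmetric])
  have s1: "{..<n} = insert m {..<m}"
  proof -
    have "{..<Suc m} = insert m {..<m}" by (rule lessThan_Suc)
    then show ?thesis by (simp only: nm)
  qed
  have s2: "{..<n} = insert 0 (Suc ` {..<m})"
  proof -
    have "{..<Suc m} = insert 0 (Suc ` {..<m})" by (rule lessThan_Suc_eq_insert_0)
    then show ?thesis by (simp only: nm)
  qed
  have L: "(\<Oplus>i\<in>{..<n}. if Suc i < n then F (Suc i) else \<zero>) = (\<Oplus>i\<in>{..<m}. F (Suc i))"
  proof -
    have "(\<Oplus>i\<in>{..<n}. if Suc i < n then F (Suc i) else \<zero>)
        = (\<Oplus>i\<in>insert m {..<m}. if Suc i < n then F (Suc i) else \<zero>)"
      by (simp only: s1)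
    also have "\<dots> = (if Suc m < n then F (Suc m) else \<zero>) \<oplus> (\<Oplus>i\<in>{..<m}. if Suc i < n then F (Suc i) else \<zero>)"
      by (rule finsum_insert) (auto simp: F)
    also have "\<dots> = (\<Oplus>i\<in>{..<m}. F (Suc i))"
    proof -
      have "(\<Oplus>i\<in>{..<m}. if Suc i < n then F (Suc i) else \<zero>) = (\<Oplus>i\<in>{..<m}. F (Suc i))"
        by (rule finsum_cong') (use nm in \<open>auto simp: F\<close>)
      then show ?thesis using nm by (simp add: F)
    qed
    finally show ?thesis .
  qed
  have R: "(\<Oplus>i\<in>{..<n}. if 0 < i then F i else \<zero>) = (\<Oplus>i\<in>{..<m}. F (Suc i))"
  proof -
    have "(\<Oplus>i\<in>{..<n}. if 0 < i then F i else \<zero>) = (\<Oplus>i\<in>insert 0 (Suc ` {..<m}). if 0 < i then F i else \<zero>)"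
      by (simp only: s2)
    also have "\<dots> = (if 0 < (0::nat) then F 0 else \<zero>) \<oplus> (\<Oplus>i\<in>Suc ` {..<m}. if 0 < i then F i else \<zero>)"
      by (rule finsum_insert) (auto simp: F)
    also have "\<dots> = (\<Oplus>i\<in>Suc ` {..<m}. if 0 < i then F i else \<zero>)" by (simp add: F)
    also have "\<dots> = (\<Oplus>i\<in>{..<m}. if 0 < Suc i then F (Suc i) else \<zero>)"
      by (rule finsum_reindex) (auto simp: F)
    also have "\<dots> = (\<Oplus>i\<in>{..<m}. F (Suc i))" by simp
    finally show ?thesis .
  qed
  show ?thesis using L R by simp
qed

lemma inner_if:
  "(\<Oplus>j\<in>{..<n}. if P \<and> R j then T j else \<zero>) = (if P then (\<Oplus>j\<in>{..<n}. if R j then T j else \<zero>) else \<zero>)"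
  if "\<And>j. T j \<in> carrier Q"
  by (cases P) (simp_all add: that)

end

context mrel begin

primrec wQ :: "bool list \<Rightarrow> 'a" where
  "wQ [] = \<one>"
| "wQ (b # w) = (if b then X else Y) \<otimes> wQ w"

lemma wQC [simp]: "wQ w \<in> carrier Q"
  by (induction w) auto

lemma wQ_eq: "wQ w = (\<Oplus>i\<in>{..<n}. \<Oplus>j\<in>{..<n}. if Mb n w i j then E i j else \<zero>)"
proof (induction w)
  case Nil
  have "(\<Oplus>i\<in>{..<n}. \<Oplus>j\<in>{..<n}. if i = j then E i j else \<zero>) = (\<Oplus>i\<in>{..<n}. E i i)"
    by (rule finsum_cong') (auto intro: finsum_singleton)
  then show ?case by (simp add: sumE)
next
  case (Cons b w)
  let ?H = "\<lambda>i. \<Oplus>j\<in>{..<n}. if Mb n w i j then E i j else \<zero>"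
  have "X \<otimes> wQ w = (\<Oplus>i\<in>{..<n}. X \<otimes> ?H i)"
    unfolding Cons.IH by (rule finsum_rdistr) auto
  also have "\<dots> = (\<Oplus>i\<in>{..<n}. \<Oplus>j\<in>{..<n}. X \<otimes> (if Mb n w i j then E i j else \<zero>))"
    by (rule finsum_cong') (auto intro!: finsum_rdistr)
  also have "\<dots> = (\<Oplus>i\<in>{..<n}. if Suc i < n then (\<Oplus>j\<in>{..<n}. if Mb n w (Suc i - 1) j then E (Suc i) j else \<zero>) else \<zero>)"
  proof (rule finsum_cong')
    fix i assume i: "i \<in> {..<n}"
    have "(\<Oplus>j\<in>{..<n}. X \<otimes> (if Mb n w i j then E i j else \<zero>)) = (\<Oplus>j\<in>{..<n}. if Suc i < n \<and> Mb n w (Suc i - 1) j then E (Suc i) j else \<zero>)"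
      by (rule finsum_cong') (use i in \<open>auto simp: XE\<close>)
    then show "(\<Oplus>j\<in>{..<n}. X \<otimes> (if Mb n w i j then E i j else \<zero>)) = (if Suc i < n then (\<Oplus>j\<in>{..<n}. if Mb n w (Suc i - 1) j then E (Suc i) j else \<zero>) else \<zero>)"
      by (simp add: inner_if)
  qed auto
  also have "\<dots> = (\<Oplus>i\<in>{..<n}. if 0 < i then (\<Oplus>j\<in>{..<n}. if Mb n w (i - 1) j then E i j else \<zero>) else \<zero>)"
    by (rule shift[of "\<lambda>i. \<Oplus>j\<in>{..<n}. if Mb n w (i - 1) j then E i j else \<zero>"]) simp
  also have "\<dots> = (\<Oplus>i\<in>{..<n}. \<Oplus>j\<in>{..<n}. if Mb n (True # w) i j then E i j else \<zero>)"
    by (rule finsum_cong') (auto simp: inner_if[symmetric])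
  finally have TT: "X \<otimes> wQ w = (\<Oplus>i\<in>{..<n}. \<Oplus>j\<in>{..<n}. if Mb n (True # w) i j then E i j else \<zero>)" .
  have "Y \<otimes> wQ w = (\<Oplus>i\<in>{..<n}. Y \<otimes> ?H i)"
    unfolding Cons.IH by (rule finsum_rdistr) auto
  also have "\<dots> = (\<Oplus>i\<in>{..<n}. \<Oplus>j\<in>{..<n}. Y \<otimes> (if Mb n w i j then E i j else \<zero>))"
    by (rule finsum_cong') (auto intro!: finsum_rdistr)
  also have "\<dots> = (\<Oplus>i\<in>{..<n}. if 0 < i then (\<Oplus>j\<in>{..<n}. if Mb n w i j then E (i - 1) j else \<zero>) else \<zero>)"
  proof (rule finsum_cong')
    fix i assume i: "i \<in> {..<n}"
    have "(\<Oplus>j\<in>{..<n}. Y \<otimes> (if Mb n w i j then E i j else \<zero>)) = (\<Oplus>j\<in>{..<n}. if 0 < i \<and> Mb n w i j then E (i - 1) j else \<zero>)"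
      by (rule finsum_cong') (use i in \<open>auto simp: YE\<close>)
    then show "(\<Oplus>j\<in>{..<n}. Y \<otimes> (if Mb n w i j then E i j else \<zero>)) = (if 0 < i then (\<Oplus>j\<in>{..<n}. if Mb n w i j then E (i - 1) j else \<zero>) else \<zero>)"
      by (simp add: inner_if)
  qed auto
  also have "\<dots> = (\<Oplus>i\<in>{..<n}. if Suc i < n then (\<Oplus>j\<in>{..<n}. if Mb n w (Suc i) j then E i j else \<zero>) else \<zero>)"
  proof -
    have c: "\<And>i. (\<Oplus>j\<in>{..<n}. if Mb n w i j then E (i - 1) j else \<zero>) \<in> carrier Q"
      by (intro finsum_closed) auto
    show ?thesis
      using shift[of "\<lambda>i. \<Oplus>j\<in>{..<n}. if Mb n w i j then E (i - 1) j else \<zero>", OF c, symmetric]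
      unfolding diff_Suc_1 .
  qed
  also have "\<dots> = (\<Oplus>i\<in>{..<n}. \<Oplus>j\<in>{..<n}. if Mb n (False # w) i j then E i j else \<zero>)"
    by (rule finsum_cong') (auto simp: inner_if[symmetric])
  finally have FF: "Y \<otimes> wQ w = (\<Oplus>i\<in>{..<n}. \<Oplus>j\<in>{..<n}. if Mb n (False # w) i j then E i j else \<zero>)" .
  show ?case
  proof (cases b)
    case True then show ?thesis by (simp only: wQ.simps if_True TT)
  next
    case False then show ?thesis by (simp only: wQ.simps if_False FF)
  qed
qed

end


context mrel begin

lemma wQ_append: "wQ (u @ v) = wQ u \<otimes> wQ v"
  by (induction u) (auto simp: m_assoc)

lemma wQ_rep: "wQ (replicate k b) = (if b then X else Y) [^] k"
proof (induction k)
  case (Suc k)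
  have "wQ (replicate (Suc k) b) = (if b then X else Y) \<otimes> wQ (replicate k b)"
    by (simp only: replicate_Suc wQ.simps)
  also have "\<dots> = (if b then X else Y) [^] Suc k"
    using Suc Ypc[of k] nat_pow_Suc2[of X k] by auto
  finally show ?case .
qed simp

lemma wQ_wd: "wQ (wd n i j) = E i j"
  unfolding wd_def wQ_append wQ_rep E_def A_def m_def by (simp add: m_assoc)

end

lemma fr_carrier_dl [simp]: "dl u \<in> carrier free_ring2"
  by (simp add: fr_simps supp_dl)

lemma fr_mult_dl: "dl u \<otimes>\<^bsub>free_ring2\<^esub> dl v = dl (u @ v)"
  by (simp add: fr_simps cm_dl_dl)

lemma fr_pow_dl: "dl [b] [^]\<^bsub>free_ring2\<^esub> k = dl (replicate k b)"
proof (induction k)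
  case 0 then show ?case by (simp add: fr_simps)
next
  case (Suc k)
  have "dl [b] [^]\<^bsub>free_ring2\<^esub> Suc k = dl (replicate k b) \<otimes>\<^bsub>free_ring2\<^esub> dl [b]"
    using Suc by simp
  also have "\<dots> = dl (replicate k b @ [b])" by (rule fr_mult_dl)
  also have "replicate k b @ [b] = replicate (Suc k) b" by (simp only: replicate_append_same replicate_Suc)
  finally show ?case .
qed

lemma gen_x_dl: "gen_x = dl [True]" and gen_y_dl: "gen_y = dl [False]"
  by (auto simp: gen_x_def gen_y_def dl_def fun_eq_iff)

lemma fr_minus: "f \<in> carrier free_ring2 \<Longrightarrow> \<ominus>\<^bsub>free_ring2\<^esub> f = (\<lambda>w. - f w)"
proof -
  assume f: "f \<in> carrier free_ring2"
  interpret R: ring free_ring2 by (rule ring_fr)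
  have "(\<lambda>w. - f w) \<in> carrier free_ring2" using f by (simp add: fr_simps supp_def)
  moreover have "(\<lambda>w. - f w) \<oplus>\<^bsub>free_ring2\<^esub> f = \<zero>\<^bsub>free_ring2\<^esub>" by (simp add: fr_simps)
  ultimately show ?thesis using f by (simp add: R.minus_equality)
qed

lemma phi_dl: "phi n (dl u) = mat n n (\<lambda>(i,j). Mi n u i j)"
  unfolding phi_def supp_dl by (simp add: dl_def)


lemma hom_pow_gen:
  assumes "ring_hom_ring R S h" "x \<in> carrier R"
  shows "h (x [^]\<^bsub>R\<^esub> (k::nat)) = h x [^]\<^bsub>S\<^esub> k"
proof (induction k)
  case 0
  interpret hh: ring_hom_ring R S h by (rule assms(1))
  show ?case by simp
next
  case (Suc k)
  interpret hh: ring_hom_ring R S h by (rule assms(1))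
  have "h (x [^]\<^bsub>R\<^esub> Suc k) = h (x [^]\<^bsub>R\<^esub> k) \<otimes>\<^bsub>S\<^esub> h x"
    using assms(2) by simp
  then show ?case using Suc by simp
qed

lemma hom_finsum_gen:
  assumes "ring_hom_ring R S h" "finite A" "F \<in> A \<rightarrow> carrier R"
  shows "h (finsum R F A) = finsum S (\<lambda>a. h (F a)) A"
  using assms(2,3)
proof (induction A rule: finite_induct)
  case empty
  interpret hh: ring_hom_ring R S h by (rule assms(1))
  show ?case by simp
next
  case (insert x A)
  interpret hh: ring_hom_ring R S h by (rule assms(1))
  have "h (finsum R F (insert x A)) = h (F x \<oplus>\<^bsub>R\<^esub> finsum R F A)"
    using insert by (simp add: hh.R.finsum_insert)
  also have "\<dots> = h (F x) \<oplus>\<^bsub>S\<^esub> h (finsum R F A)"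
    using insert by (intro hh.hom_add) (auto intro: hh.R.finsum_closed)
  also have "\<dots> = finsum S (\<lambda>a. h (F a)) (insert x A)"
    using insert by (simp add: hh.S.finsum_insert Pi_def)
  finally show ?case .
qed

lemma fr_finsum:
  assumes "finite A" "F \<in> A \<rightarrow> carrier free_ring2"
  shows "finsum free_ring2 F A = (\<lambda>v. \<Sum>a\<in>A. F a v)"
  using assms
proof (induction A rule: finite_induct)
  case empty
  interpret R: ring free_ring2 by (rule ring_fr)
  show ?case by (simp add: fr_simps)
next
  case (insert x A)
  interpret R: ring free_ring2 by (rule ring_fr)
  show ?case using insert by (simp add: R.finsum_insert fr_simps)
qed

lemma cm_scal_left: "cm (\<lambda>w. k * F w) g = (\<lambda>w. k * cm F g w)"
  by (simp add: cm_def fun_eq_iff sum_distrib_left mult.assoc)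

lemma ideal_scal:
  assumes I: "ideal I free_ring2" and h: "h \<in> I"
  shows "(\<lambda>v. k * h v) \<in> I"
proof -
  interpret I: ideal I free_ring2 by (rule I)
  have hc: "h \<in> carrier free_ring2" using h additive_subgroup.a_subset[OF I.is_additive_subgroup] by auto
  then have fh: "finite (supp h)" by (simp add: fr_simps)
  have c: "(\<lambda>v. k * dl [] v) \<in> carrier free_ring2"
    by (simp add: fr_simps) (rule finite_subset[of _ "{[]}"], auto simp: supp_def dl_def)
  have "(\<lambda>v. k * dl [] v) \<otimes>\<^bsub>free_ring2\<^esub> h = (\<lambda>v. k * h v)"
    by (simp add: fr_simps cm_scal_left cm_one_left[OF fh])
  then show ?thesis using I.I_l_closed[OF h c] by simp
qed

lemma ideal_sum:
  assumes I: "ideal I free_ring2" and "finite S" and "\<And>w. w \<in> S \<Longrightarrow> H w \<in> I"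
  shows "(\<lambda>v. \<Sum>w\<in>S. H w v) \<in> I"
  using assms(2,3)
proof (induction S rule: finite_induct)
  case empty
  interpret I: ideal I free_ring2 by (rule I)
  show ?case using additive_subgroup.zero_closed[OF I.is_additive_subgroup] by (simp add: fr_simps)
next
  case (insert x S)
  interpret I: ideal I free_ring2 by (rule I)
  have "H x \<oplus>\<^bsub>free_ring2\<^esub> (\<lambda>v. \<Sum>w\<in>S. H w v) \<in> I"
    using insert by (intro additive_subgroup.a_closed[OF I.is_additive_subgroup]) auto
  then show ?case using insert by (simp add: fr_simps)
qed



lemma Mb_repT_nil: "Mb n (replicate k True) i j = (k \<le> i \<and> i - k = j)"
proof -
  have "Mb n (replicate k True @ []) i j = (k \<le> i \<and> Mb n [] (i - k) j)" by (rule Mb_repT)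
  then show ?thesis by (simp only: append_Nil2 Mb.simps)
qed

lemma Mb_repF_nil: "i < n \<Longrightarrow> Mb n (replicate k False) i j = (i + k < n \<and> i + k = j)"
proof -
  assume "i < n"
  then have "Mb n (replicate k False @ []) i j = (i + k < n \<and> Mb n [] (i + k) j)" by (rule Mb_repF)
  then show ?thesis by (simp only: append_Nil2 Mb.simps)
qed

lemma phi_r1: "phi n (dl (replicate n True)) = 0\<^sub>m n n"
  unfolding phi_dl by (rule eq_matI) (auto simp: Mi_def Mb_repT_nil)

lemma phi_r2: "phi n (dl (replicate n False)) = 0\<^sub>m n n"
  unfolding phi_dl by (rule eq_matI) (auto simp: Mi_def Mb_repF_nil)

lemma phi_r3a:
  assumes "n = Suc m" "1 \<le> m"
  shows "phi n (\<lambda>w. dl [True, False] w + dl (replicate m False @ replicate m True) w) = 1\<^sub>m n"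
proof -
  have "phi n (\<lambda>w. dl [True, False] w + dl (replicate m False @ replicate m True) w)
      = phi n (dl [True, False]) + phi n (dl (replicate m False @ replicate m True))"
    by (rule phi_add) (simp_all add: supp_dl)
  also have "\<dots> = 1\<^sub>m n"
  proof (rule eq_matI)
    fix i j assume ij: "i < dim_row (1\<^sub>m n :: int mat)" "j < dim_col (1\<^sub>m n :: int mat)"
    then have i: "i < n" and j: "j < n" by auto
    have a: "Mb n [True, False] i j = (0 < i \<and> i = j)" using i by (cases i) auto
    have b: "Mb n (replicate m False @ replicate m True) i j = (i = 0 \<and> j = 0)"
    proof -
      have "Mb n (replicate m False @ replicate m True) i j = (i + m < n \<and> Mb n (replicate m True) (i + m) j)"
        by (rule Mb_repF[OF i])
      also have "\<dots> = (i = 0 \<and> j = 0)" unfolding Mb_repT_nil using assms by auto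
      finally show ?thesis .
    qed
    show "(phi n (dl [True, False]) + phi n (dl (replicate m False @ replicate m True))) $$ (i, j) = 1\<^sub>m n $$ (i, j)"
      using i j a b unfolding phi_dl Mi_def by (simp del: Mb.simps)
  qed (auto simp: phi_dl)
  finally show ?thesis .
qed

theorem theorem1:
  fixes n :: nat
  assumes "n \<ge> 2"
  shows "free_ring2 Quot (genideal free_ring2 (relators n)) \<simeq> ring_mat TYPE(int) n ()"
proof -
  interpret R: ring free_ring2 by (rule ring_fr)
  interpret S: ring "ring_mat TYPE(int) n ()" by (rule ring_mat)
  interpret h: ring_hom_ring free_ring2 "ring_mat TYPE(int) n ()" "phi n" by (rule ring_hom_phi)
  define m where "m = n - 1"
  have nm: "n = Suc m" and m1: "1 \<le> m" using assms by (auto simp: m_def)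
  let ?I = "genideal free_ring2 (relators n)"
  let ?r3 = "(dl [True] \<otimes>\<^bsub>free_ring2\<^esub> dl [False] \<oplus>\<^bsub>free_ring2\<^esub> dl (replicate m False) \<otimes>\<^bsub>free_ring2\<^esub> dl (replicate m True)) \<ominus>\<^bsub>free_ring2\<^esub> \<one>\<^bsub>free_ring2\<^esub>"
  have rel_eq: "relators n = {dl (replicate n True), dl (replicate n False), ?r3}"
    unfolding relators_def gen_x_dl gen_y_dl fr_pow_dl m_def ..
  have relC: "relators n \<subseteq> carrier free_ring2" unfolding rel_eq by auto
  have Iid: "ideal ?I free_ring2" by (rule R.genideal_ideal[OF relC])
  have r3: "phi n ?r3 = 0\<^sub>m n n"
  proof -
    have e: "dl [True] \<otimes>\<^bsub>free_ring2\<^esub> dl [False] \<oplus>\<^bsub>free_ring2\<^esub> dl (replicate m False) \<otimes>\<^bsub>free_ring2\<^esub> dl (replicate m True)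
        = (\<lambda>w. dl [True, False] w + dl (replicate m False @ replicate m True) w)"
      by (simp add: fr_mult_dl) (simp add: fr_simps)
    have c: "dl [True] \<otimes>\<^bsub>free_ring2\<^esub> dl [False] \<oplus>\<^bsub>free_ring2\<^esub> dl (replicate m False) \<otimes>\<^bsub>free_ring2\<^esub> dl (replicate m True) \<in> carrier free_ring2"
      by simp
    have "phi n ?r3 = phi n (dl [True] \<otimes>\<^bsub>free_ring2\<^esub> dl [False] \<oplus>\<^bsub>free_ring2\<^esub> dl (replicate m False) \<otimes>\<^bsub>free_ring2\<^esub> dl (replicate m True))
         \<ominus>\<^bsub>ring_mat TYPE(int) n ()\<^esub> phi n \<one>\<^bsub>free_ring2\<^esub>"
      using c by (simp add: R.minus_eq S.minus_eq)
    also have "\<dots> = \<one>\<^bsub>ring_mat TYPE(int) n ()\<^esub> \<ominus>\<^bsub>ring_mat TYPE(int) n ()\<^esub> \<one>\<^bsub>ring_mat TYPE(int) n ()\<^esub>"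
      unfolding e phi_r3a[OF nm m1] by (simp add: ring_mat_simps)
    also have "\<dots> = \<zero>\<^bsub>ring_mat TYPE(int) n ()\<^esub>" by (simp add: S.minus_eq S.r_neg)
    finally show ?thesis by (simp add: ring_mat_simps)
  qed
  have ker1: "?I \<subseteq> a_kernel free_ring2 (ring_mat TYPE(int) n ()) (phi n)"
  proof (rule R.genideal_minimal[OF h.kernel_is_ideal])
    show "relators n \<subseteq> a_kernel free_ring2 (ring_mat TYPE(int) n ()) (phi n)"
      unfolding rel_eq a_kernel_def' using phi_r1 phi_r2 r3 relC rel_eq
      by (auto simp: ring_mat_simps)
  qed
  have ker2: "a_kernel free_ring2 (ring_mat TYPE(int) n ()) (phi n) \<subseteq> ?I"
  proof
    fix f assume "f \<in> a_kernel free_ring2 (ring_mat TYPE(int) n ()) (phi n)"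
    then have fC: "f \<in> carrier free_ring2" and pf: "phi n f = 0\<^sub>m n n"
      unfolding a_kernel_def' by (simp_all add: ring_mat_simps)
    have ffin: "finite (supp f)" using fC by (simp add: fr_simps)
    interpret I: ideal ?I free_ring2 by (rule Iid)
    interpret Q: ring "free_ring2 Quot ?I" by (rule I.quotient_is_ring)
    have pihom: "ring_hom_ring free_ring2 (free_ring2 Quot ?I) (a_r_coset free_ring2 ?I)"
      by (rule I.rcos_ring_hom_ring)
    interpret pi: ring_hom_ring free_ring2 "free_ring2 Quot ?I" "a_r_coset free_ring2 ?I" by (rule pihom)
    let ?pi = "a_r_coset free_ring2 ?I"
    have z: "\<zero>\<^bsub>free_ring2 Quot ?I\<^esub> = ?I"
      unfolding FactRing_def by (simp only: ring.select_convs)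
    have pi0: "?pi r = \<zero>\<^bsub>free_ring2 Quot ?I\<^esub>" if "r \<in> ?I" for r
      by (simp only: z R.a_rcos_zero[OF Iid that])
    have inI: "r \<in> ?I" if "r \<in> relators n" for r
      using R.genideal_self[OF relC] that by blast
    have Xn: "?pi gen_x [^]\<^bsub>free_ring2 Quot ?I\<^esub> n = \<zero>\<^bsub>free_ring2 Quot ?I\<^esub>"
      using hom_pow_gen[OF pihom, of gen_x n] pi0[OF inI[of "gen_x [^]\<^bsub>free_ring2\<^esub> n"]]
      by (simp add: relators_def gen_x_dl)
    have Yn: "?pi gen_y [^]\<^bsub>free_ring2 Quot ?I\<^esub> n = \<zero>\<^bsub>free_ring2 Quot ?I\<^esub>"
      using hom_pow_gen[OF pihom, of gen_y n] pi0[OF inI[of "gen_y [^]\<^bsub>free_ring2\<^esub> n"]]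
      by (simp add: relators_def gen_y_dl)
    let ?a = "gen_x \<otimes>\<^bsub>free_ring2\<^esub> gen_y \<oplus>\<^bsub>free_ring2\<^esub> gen_y [^]\<^bsub>free_ring2\<^esub> (n - 1) \<otimes>\<^bsub>free_ring2\<^esub> gen_x [^]\<^bsub>free_ring2\<^esub> (n - 1)"
    have aC: "?a \<in> carrier free_ring2" by (simp add: gen_x_dl gen_y_dl)
    have "?pi (?a \<ominus>\<^bsub>free_ring2\<^esub> \<one>\<^bsub>free_ring2\<^esub>) = \<zero>\<^bsub>free_ring2 Quot ?I\<^esub>"
      by (rule pi0, rule inI) (simp add: relators_def)
    then have "?pi ?a \<ominus>\<^bsub>free_ring2 Quot ?I\<^esub> \<one>\<^bsub>free_ring2 Quot ?I\<^esub> = \<zero>\<^bsub>free_ring2 Quot ?I\<^esub>"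
      using aC by (simp add: R.minus_eq Q.minus_eq)
    then have pa: "?pi ?a = \<one>\<^bsub>free_ring2 Quot ?I\<^esub>"
    proof -
      assume d: "?pi ?a \<ominus>\<^bsub>free_ring2 Quot ?I\<^esub> \<one>\<^bsub>free_ring2 Quot ?I\<^esub> = \<zero>\<^bsub>free_ring2 Quot ?I\<^esub>"
      have pc: "?pi ?a \<in> carrier (free_ring2 Quot ?I)" using aC by simp
      have "?pi ?a = (?pi ?a \<ominus>\<^bsub>free_ring2 Quot ?I\<^esub> \<one>\<^bsub>free_ring2 Quot ?I\<^esub>) \<oplus>\<^bsub>free_ring2 Quot ?I\<^esub> \<one>\<^bsub>free_ring2 Quot ?I\<^esub>"
        using pc by (simp add: Q.minus_eq Q.a_assoc Q.l_neg)
      then show ?thesis using d by simp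
    qed
    have relQ: "?pi gen_x \<otimes>\<^bsub>free_ring2 Quot ?I\<^esub> ?pi gen_y \<oplus>\<^bsub>free_ring2 Quot ?I\<^esub> ?pi gen_y [^]\<^bsub>free_ring2 Quot ?I\<^esub> (n - 1) \<otimes>\<^bsub>free_ring2 Quot ?I\<^esub> ?pi gen_x [^]\<^bsub>free_ring2 Quot ?I\<^esub> (n - 1) = \<one>\<^bsub>free_ring2 Quot ?I\<^esub>"
      using pa hom_pow_gen[OF pihom, of gen_x "n - 1"] hom_pow_gen[OF pihom, of gen_y "n - 1"]
      by (simp add: gen_x_dl gen_y_dl)
    interpret M: mrel "free_ring2 Quot ?I" n "?pi gen_x" "?pi gen_y"
      by unfold_locales (use assms Xn Yn relQ in \<open>auto simp: gen_x_dl gen_y_dl\<close>)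
    have piw: "?pi (dl w) = M.wQ w" for w
    proof (induction w)
      case Nil then show ?case using pi.hom_one by (simp add: fr_simps)
    next
      case (Cons b w)
      have "dl (b # w) = dl [b] \<otimes>\<^bsub>free_ring2\<^esub> dl w" by (simp add: fr_mult_dl)
      then have e1: "?pi (dl (b # w)) = ?pi (dl [b]) \<otimes>\<^bsub>free_ring2 Quot ?I\<^esub> ?pi (dl w)" by simp
      have e2: "?pi (dl [b]) = (if b then ?pi gen_x else ?pi gen_y)" by (simp add: gen_x_dl gen_y_dl)
      show ?case by (simp only: M.wQ.simps e1 e2 Cons.IH)
    qed
    define G where "G w = dl w \<ominus>\<^bsub>free_ring2\<^esub> (\<Oplus>\<^bsub>free_ring2\<^esub>i\<in>{..<n}. \<Oplus>\<^bsub>free_ring2\<^esub>j\<in>{..<n}. if Mb n w i j then dl (wd n i j) else \<zero>\<^bsub>free_ring2\<^esub>)" for w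
    have Fc: "(if Mb n w i j then dl (wd n i j) else \<zero>\<^bsub>free_ring2\<^esub>) \<in> carrier free_ring2" for w i j
      by simp
    have Sc: "(\<Oplus>\<^bsub>free_ring2\<^esub>j\<in>{..<n}. if Mb n w i j then dl (wd n i j) else \<zero>\<^bsub>free_ring2\<^esub>) \<in> carrier free_ring2" for w i
      by (rule R.finsum_closed) auto
    have SSc: "(\<Oplus>\<^bsub>free_ring2\<^esub>i\<in>{..<n}. \<Oplus>\<^bsub>free_ring2\<^esub>j\<in>{..<n}. if Mb n w i j then dl (wd n i j) else \<zero>\<^bsub>free_ring2\<^esub>) \<in> carrier free_ring2" for w
      by (rule R.finsum_closed) (auto intro: Sc)
    have piS: "?pi (\<Oplus>\<^bsub>free_ring2\<^esub>i\<in>{..<n}. \<Oplus>\<^bsub>free_ring2\<^esub>j\<in>{..<n}. if Mb n w i j then dl (wd n i j) else \<zero>\<^bsub>free_ring2\<^esub>)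
        = M.wQ w" for w
    proof -
      have "?pi (\<Oplus>\<^bsub>free_ring2\<^esub>i\<in>{..<n}. \<Oplus>\<^bsub>free_ring2\<^esub>j\<in>{..<n}. if Mb n w i j then dl (wd n i j) else \<zero>\<^bsub>free_ring2\<^esub>)
          = (\<Oplus>\<^bsub>free_ring2 Quot ?I\<^esub>i\<in>{..<n}. ?pi (\<Oplus>\<^bsub>free_ring2\<^esub>j\<in>{..<n}. if Mb n w i j then dl (wd n i j) else \<zero>\<^bsub>free_ring2\<^esub>))"
        by (rule hom_finsum_gen[OF pihom]) (auto intro: Sc)
      also have "\<dots> = (\<Oplus>\<^bsub>free_ring2 Quot ?I\<^esub>i\<in>{..<n}. \<Oplus>\<^bsub>free_ring2 Quot ?I\<^esub>j\<in>{..<n}. if Mb n w i j then M.E i j else \<zero>\<^bsub>free_ring2 Quot ?I\<^esub>)"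
      proof (rule Q.finsum_cong')
        fix i assume "i \<in> {..<n}"
        have "?pi (\<Oplus>\<^bsub>free_ring2\<^esub>j\<in>{..<n}. if Mb n w i j then dl (wd n i j) else \<zero>\<^bsub>free_ring2\<^esub>)
            = (\<Oplus>\<^bsub>free_ring2 Quot ?I\<^esub>j\<in>{..<n}. ?pi (if Mb n w i j then dl (wd n i j) else \<zero>\<^bsub>free_ring2\<^esub>))"
          by (rule hom_finsum_gen[OF pihom]) auto
        also have "\<dots> = (\<Oplus>\<^bsub>free_ring2 Quot ?I\<^esub>j\<in>{..<n}. if Mb n w i j then M.E i j else \<zero>\<^bsub>free_ring2 Quot ?I\<^esub>)"
          by (rule Q.finsum_cong') (auto simp: piw M.wQ_wd)
        finally show "?pi (\<Oplus>\<^bsub>free_ring2\<^esub>j\<in>{..<n}. if Mb n w i j then dl (wd n i j) else \<zero>\<^bsub>free_ring2\<^esub>)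
            = (\<Oplus>\<^bsub>free_ring2 Quot ?I\<^esub>j\<in>{..<n}. if Mb n w i j then M.E i j else \<zero>\<^bsub>free_ring2 Quot ?I\<^esub>)" .
      qed (auto intro: Q.finsum_closed)
      also have "\<dots> = M.wQ w" by (rule M.wQ_eq[symmetric])
      finally show ?thesis .
    qed
    have GI: "G w \<in> ?I" for w
    proof -
      have Gc: "G w \<in> carrier free_ring2" unfolding G_def using SSc by simp
      have "?pi (G w) = ?pi (dl w) \<ominus>\<^bsub>free_ring2 Quot ?I\<^esub> ?pi (\<Oplus>\<^bsub>free_ring2\<^esub>i\<in>{..<n}. \<Oplus>\<^bsub>free_ring2\<^esub>j\<in>{..<n}. if Mb n w i j then dl (wd n i j) else \<zero>\<^bsub>free_ring2\<^esub>)"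
        unfolding G_def using SSc by (simp add: R.minus_eq Q.minus_eq)
      also have "\<dots> = \<zero>\<^bsub>free_ring2 Quot ?I\<^esub>" unfolding piS piw by (simp add: Q.minus_eq Q.r_neg)
      finally have "?pi (G w) = ?I" using z by simp
      then show ?thesis by (rule I.rcos_const_imp_mem[OF Gc])
    qed
    have Gpt: "G w = (\<lambda>v. dl w v - (\<Sum>i<n. \<Sum>j<n. if Mb n w i j then dl (wd n i j) v else 0))" for w
    proof -
      have S1: "(\<Oplus>\<^bsub>free_ring2\<^esub>j\<in>{..<n}. if Mb n w i j then dl (wd n i j) else \<zero>\<^bsub>free_ring2\<^esub>)
          = (\<lambda>v. \<Sum>j<n. if Mb n w i j then dl (wd n i j) v else 0)" for i
        by (subst fr_finsum) (auto simp: fr_simps supp_def dl_def intro!: sum.cong ext)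
      have S2: "(\<Oplus>\<^bsub>free_ring2\<^esub>i\<in>{..<n}. \<Oplus>\<^bsub>free_ring2\<^esub>j\<in>{..<n}. if Mb n w i j then dl (wd n i j) else \<zero>\<^bsub>free_ring2\<^esub>)
          = (\<lambda>v. \<Sum>i<n. \<Sum>j<n. if Mb n w i j then dl (wd n i j) v else 0)"
        unfolding S1 by (subst fr_finsum) (auto intro: Sc[of w, unfolded S1])
      have "G w = dl w \<oplus>\<^bsub>free_ring2\<^esub> (\<lambda>v. - (\<Oplus>\<^bsub>free_ring2\<^esub>i\<in>{..<n}. \<Oplus>\<^bsub>free_ring2\<^esub>j\<in>{..<n}. if Mb n w i j then dl (wd n i j) else \<zero>\<^bsub>free_ring2\<^esub>) v)"
        unfolding G_def R.minus_eq fr_minus[OF SSc] ..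
      then show ?thesis unfolding S2 by (simp add: fr_simps)
    qed
    have phz: "(\<Sum>w\<in>supp f. f w * Mi n w i j) = 0" if "i < n" "j < n" for i j
    proof -
      have "phi n f $$ (i, j) = (\<Sum>w\<in>supp f. f w * Mi n w i j)" using that by (simp add: phi_def)
      then show ?thesis using pf that by simp
    qed
    have feq: "f = (\<lambda>v. \<Sum>w\<in>supp f. f w * G w v)"
    proof (rule ext)
      fix v
      have "(\<Sum>w\<in>supp f. f w * G w v) = (\<Sum>w\<in>supp f. f w * dl w v) - (\<Sum>w\<in>supp f. \<Sum>i<n. \<Sum>j<n. f w * Mi n w i j * dl (wd n i j) v)"
      proof -
        have "(\<Sum>w\<in>supp f. f w * G w v) = (\<Sum>w\<in>supp f. f w * dl w v) - (\<Sum>w\<in>supp f. f w * (\<Sum>i<n. \<Sum>j<n. if Mb n w i j then dl (wd n i j) v else 0))"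
          unfolding Gpt by (simp add: right_diff_distrib sum_subtractf)
        also have "(\<Sum>w\<in>supp f. f w * (\<Sum>i<n. \<Sum>j<n. if Mb n w i j then dl (wd n i j) v else 0))
            = (\<Sum>w\<in>supp f. \<Sum>i<n. \<Sum>j<n. f w * Mi n w i j * dl (wd n i j) v)"
          unfolding sum_distrib_left by (intro sum.cong refl) (auto simp: Mi_def)
        finally show ?thesis .
      qed
      also have "(\<Sum>w\<in>supp f. \<Sum>i<n. \<Sum>j<n. f w * Mi n w i j * dl (wd n i j) v) = (\<Sum>i<n. \<Sum>j<n. (\<Sum>w\<in>supp f. f w * Mi n w i j) * dl (wd n i j) v)"
      proof -
        have "(\<Sum>w\<in>supp f. \<Sum>i<n. \<Sum>j<n. f w * Mi n w i j * dl (wd n i j) v) = (\<Sum>i<n. \<Sum>w\<in>supp f. \<Sum>j<n. f w * Mi n w i j * dl (wd n i j) v)"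
          by (rule sum.swap)
        also have "\<dots> = (\<Sum>i<n. \<Sum>j<n. \<Sum>w\<in>supp f. f w * Mi n w i j * dl (wd n i j) v)"
          by (rule sum.cong[OF refl], rule sum.swap)
        finally show ?thesis by (simp add: sum_distrib_right)
      qed
      also have "\<dots> = 0" by (simp add: phz)
      also have "(\<Sum>w\<in>supp f. f w * dl w v) = f v" using decomp[OF ffin order_refl] by metis
      finally show "f v = (\<Sum>w\<in>supp f. f w * G w v)" by simp
    qed
    have TI: "(\<lambda>v. \<Sum>w\<in>supp f. f w * G w v) \<in> ?I"
      by (rule ideal_sum[OF Iid ffin]) (rule ideal_scal[OF Iid GI])
    show "f \<in> ?I" by (subst feq) (rule TI)
  qed
  have "a_kernel free_ring2 (ring_mat TYPE(int) n ()) (phi n) = ?I" using ker1 ker2 by blast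
  then show ?thesis using h.FactRing_iso[OF phi_surj] by simp
qed


end
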